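(* Let $p$ be a prime, $1\le e<p$, and define $f_n\in\mathbb{F}_p[c]$ by $f_1=c$ and $f_{n+1}=c^{p^n}-f_n^e$ for $n\ge1$. Then for all sufficiently large $n$ there is a nonzero prime ideal $\mathfrak{p}\subseteq\mathbb{F}_p[c]$ with $f_n\in\mathfrak{p}$ but $f_j\notin\mathfrak{p}$ for all $1\le j<n$. *)

theory Defs
  imports "Berlekamp_Zassenhaus.Finite_Field" "HOL-Computational_Algebra.Polynomial"
begin

text \<open>F_p is the type 'p mod_ring with CARD('p) prime; F_p[c] is ('p mod_ring) poly.
  The sequence is indexed from 1; the value at index 0 is an irrelevant filler.\<close>

fun fseq :: "nat \<Rightarrow> nat \<Rightarrow> 'p::prime_card mod_ring poly" where
  "fseq e 0 = 0"
| "fseq e (Suc 0) = [:0, 1:]"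
| "fseq e (Suc (Suc n)) = monom 1 (CARD('p) ^ Suc n) - (fseq e (Suc n)) ^ e"

definition is_ideal :: "'a::comm_ring_1 set \<Rightarrow> bool" where
  "is_ideal I \<longleftrightarrow> 0 \<in> I \<and> (\<forall>x\<in>I. \<forall>y\<in>I. x + y \<in> I) \<and> (\<forall>r x. x \<in> I \<longrightarrow> r * x \<in> I)"

definition is_prime_ideal :: "'a::comm_ring_1 set \<Rightarrow> bool" where
  "is_prime_ideal P \<longleftrightarrow> is_ideal P \<and> P \<noteq> UNIV \<and> (\<forall>a b. a * b \<in> P \<longrightarrow> a \<in> P \<or> b \<in> P)"

end

theory Submission
  imports Defs
begin

lemma pow_dvd_pderiv:
  fixes q g :: "'a::idom poly"
  assumes "q ^ a dvd g"
  shows "q ^ (a - 1) dvd pderiv g"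
proof -
  obtain r where g: "g = q ^ a * r" using assms by blast
  have "pderiv g = q ^ a * pderiv r + r * smult (of_nat a) (q ^ (a - 1) * pderiv q)"
    by (simp add: g pderiv_mult pderiv_power)
  moreover have "q ^ (a - 1) dvd q ^ a" by (simp add: le_imp_power_dvd)
  have d1: "q ^ (a - 1) dvd q ^ a * pderiv r" using \<open>q ^ (a - 1) dvd q ^ a\<close> by (rule dvd_mult2)
  have d2: "q ^ (a - 1) dvd r * smult (of_nat a) (q ^ (a - 1) * pderiv q)"
    by (intro dvd_mult dvd_smult dvd_mult2 dvd_refl)
  ultimately show ?thesis using d1 d2 by simp
qed

lemma fseq_deg:
  fixes e :: nat
  assumes "1 \<le> e" "e < CARD('p::prime_card)"
  shows "(fseq e (Suc m) :: 'p mod_ring poly) \<noteq> 0 \<and> degree (fseq e (Suc m) :: 'p mod_ring poly) = CARD('p) ^ m"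
proof (induction m)
  case 0
  then show ?case by simp
next
  case (Suc m)
  let ?p = "CARD('p)"
  let ?f = "fseq e (Suc m) :: 'p mod_ring poly"
  have p1: "?p > 1" using prime_card[where 'a='p] prime_gt_1_nat by auto
  have dm: "degree (monom (1::'p mod_ring) (?p ^ Suc m)) = ?p ^ Suc m"
    by (simp add: degree_monom_eq)
  have "degree (?f ^ e) = e * ?p ^ m" using Suc by (simp add: degree_power_eq)
  also have "\<dots> < ?p * ?p ^ m" using assms by simp
  finally have lt: "degree (?f ^ e) < degree (monom (1::'p mod_ring) (?p ^ Suc m))" using dm by simp
  have "degree (monom 1 (?p ^ Suc m) - ?f ^ e) = ?p ^ Suc m"
    using degree_add_eq_left[of "- (?f ^ e)", OF _] lt dm by simp
  then show ?case using p1 by (auto simp del: power_Suc)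
qed

lemma fseq_pderiv:
  fixes e :: nat
  assumes "1 \<le> e" "e < CARD('p::prime_card)"
  shows "pderiv (fseq e (Suc m) :: 'p mod_ring poly) =
     smult ((- of_nat e) ^ m) ((\<Prod>i<m. fseq e (Suc i)) ^ (e - 1))"
proof (induction m)
  case 0
  then show ?case by (simp add: pderiv_pCons)
next
  case (Suc m)
  let ?f = "fseq e (Suc m) :: 'p mod_ring poly"
  have "of_nat (CARD('p) ^ Suc m) = (0::'p mod_ring)"
    by (simp del: power_Suc add: of_nat_power)
  then have "pderiv (monom (1::'p mod_ring) (CARD('p) ^ Suc m)) = 0"
    by (simp add: pderiv_monom del: power_Suc)
  then have "pderiv (fseq e (Suc (Suc m)) :: 'p mod_ring poly) = - pderiv (?f ^ e)"
    by (simp add: pderiv_diff del: power_Suc)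
  also have "\<dots> = - smult (of_nat e) (?f ^ (e - 1) * pderiv ?f)" by (simp add: pderiv_power)
  also have "\<dots> = smult ((- of_nat e) ^ Suc m) ((\<Prod>i<Suc m. fseq e (Suc i)) ^ (e - 1))"
    by (simp add: Suc power_mult_distrib algebra_simps)
  finally show ?case .
qed

lemma geo_bound:
  fixes p e m :: nat
  assumes "1 \<le> e" "e < p"
  shows "e * (\<Sum>i<m. p ^ i) < p ^ m"
proof -
  have "(p - 1) * (\<Sum>i<m. p ^ i) + 1 = p ^ m"
  proof (induction m)
    case (Suc m)
    have "(p - 1) * (\<Sum>i<Suc m. p ^ i) + 1 = ((p - 1) * (\<Sum>i<m. p ^ i) + 1) + (p - 1) * p ^ m"
      by (simp add: algebra_simps)
    also have "\<dots> = p ^ m + (p - 1) * p ^ m" using Suc by simp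
    also have "\<dots> = p ^ Suc m" using assms by (cases p) (auto simp: algebra_simps)
    finally show ?case .
  qed simp
  moreover have "e * (\<Sum>i<m. p ^ i) \<le> (p - 1) * (\<Sum>i<m. p ^ i)"
    using assms by (intro mult_right_mono) auto
  ultimately show ?thesis by linarith
qed

theorem lemma5p4:
  fixes e :: nat
  assumes "1 \<le> e" and "e < CARD('p::prime_card)"
  shows "\<exists>N. \<forall>n\<ge>N. \<exists>P :: 'p mod_ring poly set.
           is_prime_ideal P \<and> P \<noteq> {0} \<and> fseq e n \<in> P \<and>
           (\<forall>j. 1 \<le> j \<and> j < n \<longrightarrow> fseq e j \<notin> P)"
proof (rule exI[of _ 1], intro allI impI)
  fix n :: nat assume "1 \<le> n"
  then obtain m where n: "n = Suc m" by (cases n) auto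
  let ?g = "fseq e (Suc m) :: 'p mod_ring poly"
  let ?h = "(\<Prod>i<m. fseq e (Suc i)) :: 'p mod_ring poly"
  have nz: "\<And>k. (fseq e (Suc k) :: 'p mod_ring poly) \<noteq> 0" using fseq_deg[OF assms] by blast
  have g0: "?g \<noteq> 0" using nz by blast
  have h0: "?h \<noteq> 0" using nz by (simp add: prod_zero_iff)
  have e0: "(of_nat e :: 'p mod_ring) \<noteq> 0"
  proof
    assume "(of_nat e :: 'p mod_ring) = 0"
    then have "CARD('p) dvd e" by (rule of_nat_0_mod_ring_dvd)
    then have "CARD('p) \<le> e" using assms(1) by (intro dvd_imp_le) auto
    then show False using assms(2) by simp
  qed
  have hd: "?h * pderiv ?g = smult ((- of_nat e) ^ m) (?h ^ e)"
    using fseq_pderiv[OF assms, of m] assms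
    by (cases e) (auto simp: mult_ac)
  have hd0: "?h * pderiv ?g \<noteq> 0" using hd h0 e0 by simp
  have degh: "degree ?h = (\<Sum>i<m. CARD('p) ^ i)"
  proof -
    have "degree ?h = (\<Sum>i<m. degree (fseq e (Suc i) :: 'p mod_ring poly))"
      by (rule degree_prod_eq_sum_degree) (use nz in blast)
    also have "\<dots> = (\<Sum>i<m. CARD('p) ^ i)" using fseq_deg[OF assms] by simp
    finally show ?thesis .
  qed
  have "degree (?h * pderiv ?g) = e * (\<Sum>i<m. CARD('p) ^ i)"
    using hd h0 e0 degh by (simp add: degree_power_eq)
  also have "\<dots> < degree ?g" using geo_bound[OF assms] fseq_deg[OF assms] by simp
  finally have ndvd: "\<not> ?g dvd ?h * pderiv ?g"
    using hd0 by (meson dvd_imp_degree_le not_le)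
  have "\<exists>q. prime q \<and> q dvd ?g \<and> \<not> q dvd ?h"
  proof (rule ccontr)
    assume A: "\<not> ?thesis"
    have "?g dvd ?h * pderiv ?g"
    proof (rule multiplicity_le_imp_dvd[OF g0])
      fix q :: "'p mod_ring poly" assume q: "prime q"
      show "multiplicity q ?g \<le> multiplicity q (?h * pderiv ?g)"
      proof (cases "multiplicity q ?g = 0")
        case False
        then have "q dvd ?g" using multiplicity_dvd'[of 1 q ?g] by simp
        then have qh: "q dvd ?h" using A q by blast
        have pd0: "pderiv ?g \<noteq> 0" using hd0 by auto
        have nu: "\<not> is_unit q" using q prime_elem_not_unit prime_def by blast
        have m1: "multiplicity q ?h \<ge> 1"
          using multiplicity_geI[OF h0 nu, of 1] qh by simp
        have m2: "multiplicity q (pderiv ?g) \<ge> multiplicity q ?g - 1"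
          by (rule multiplicity_geI[OF pd0 nu]) (rule pow_dvd_pderiv[OF multiplicity_dvd])
        have "multiplicity q (?h * pderiv ?g) = multiplicity q ?h + multiplicity q (pderiv ?g)"
          using q h0 pd0 by (simp add: prime_elem_multiplicity_mult_distrib)
        then show ?thesis using m1 m2 by linarith
      qed simp
    qed
    then show False using ndvd by blast
  qed
  then obtain q where q: "prime q" "q dvd ?g" "\<not> q dvd ?h" by blast
  define P where "P = {x. q dvd x}"
  have nuq: "\<not> q dvd 1" using q(1) prime_elem_not_unit prime_def by blast
  have "1 \<notin> P" using nuq unfolding P_def by simp
  then have "P \<noteq> UNIV" by blast
  then have "is_prime_ideal P"
    unfolding is_prime_ideal_def is_ideal_def
    using q(1) unfolding P_def by (auto simp: prime_dvd_mult_iff)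
  moreover have "P \<noteq> {0}"
  proof
    assume "P = {0}"
    moreover have "q \<in> P" unfolding P_def by simp
    ultimately have "q = 0" by blast
    then show False using q(1) by simp
  qed
  moreover have "fseq e n \<in> P" using q n unfolding P_def by simp
  moreover have "\<forall>j. 1 \<le> j \<and> j < n \<longrightarrow> fseq e j \<notin> P"
  proof (intro allI impI)
    fix j assume j: "1 \<le> j \<and> j < n"
    then obtain i where i: "j = Suc i" "i < m" using n by (cases j) auto
    have "fseq e j dvd ?h" using i by (auto intro: dvd_prodI)
    then show "fseq e j \<notin> P" using q(3) unfolding P_def by (auto intro: dvd_trans)
  qed
  ultimately show "\<exists>P :: 'p mod_ring poly set.
           is_prime_ideal P \<and> P \<noteq> {0} \<and> fseq e n \<in> P \<and>
           (\<forall>j. 1 \<le> j \<and> j < n \<longrightarrow> fseq e j \<notin> P)" by blast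
qed

end
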